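(* Let $M_1,\dots,M_n\in\mathrm{St}_{p,k}$ be such that $A=\frac1n\sum_{i=1}^n M_i$ has full column rank $k$, and let $G=\operatorname{uf}(A)=A(A^\top A)^{-1/2}$ be the orthogonal factor of the polar decomposition of $A$. Then $$\frac1n\sum_{i=1}^n P^{\mathrm{St}}_G(M_i-G)=0,$$ so that $G$ is a (closed-form) solution of the $R$-barycenter fixed-point equation $G=R^{\mathrm{o}}_G\big(\frac1n\sum_{i=1}^n (R^{\mathrm{o}}_G)^{-1}(M_i)\big)$ associated with the orthographic retraction $R^{\mathrm{o}}$ on $\mathrm{St}_{p,k}$, whose inverse is $(R^{\mathrm{o}}_G)^{-1}(V)=P^{\mathrm{St}}_G(V-G)$. *)

theory Defs
  imports "HOL-Analysis.Analysis"
begin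

text \<open>Matrices are real^'k^'p : p rows, k columns.\<close>

definition stiefel :: "(real^'k^'p) set" where
  "stiefel = {M. transpose M ** M = mat 1}"

definition sym_part :: "real^'k^'k \<Rightarrow> real^'k^'k" where
  "sym_part X = (1/2) *\<^sub>R (X + transpose X)"

text \<open>Orthogonal projection onto the tangent space of the Stiefel manifold at G
  (Euclidean metric): P_G(Z) = Z - G sym(G^T Z).\<close>
definition proj_St :: "real^'k^'p \<Rightarrow> real^'k^'p \<Rightarrow> real^'k^'p" where
  "proj_St G Z = Z - G ** sym_part (transpose G ** Z)"

definition pos_def_mat :: "real^'k^'k \<Rightarrow> bool" where
  "pos_def_mat S \<longleftrightarrow> transpose S = S \<and> (\<forall>x. x \<noteq> 0 \<longrightarrow> x \<bullet> (S *v x) > 0)"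

text \<open>Principal square root of a symmetric positive definite matrix.\<close>
definition mat_sqrt :: "real^'k^'k \<Rightarrow> real^'k^'k" where
  "mat_sqrt S = (THE X. pos_def_mat X \<and> X ** X = S)"

text \<open>Orthogonal factor of the polar decomposition: uf(A) = A (A^T A)^(-1/2).\<close>
definition uf :: "real^'k^'p \<Rightarrow> real^'k^'p" where
  "uf A = A ** matrix_inv (mat_sqrt (transpose A ** A))"

end

theory Submission
  imports Defs
begin


lemma sym_dot:
  fixes S :: "real^'n^'n"
  assumes "transpose S = S"
  shows "(S *v x) \<bullet> y = x \<bullet> (S *v y)"
proof -
  have "S *v x = x v* S" by (metis assms transpose_matrix_vector)
  then show ?thesis by (simp add: dot_lmul_matrix)
qed

lemma eig_exists:
  fixes S :: "real^'n^'n"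
  assumes sym: "transpose S = S" and W: "subspace W" "(*v) S ` W \<subseteq> W" "W \<noteq> {0}"
  shows "\<exists>u\<in>W. norm u = 1 \<and> S *v u = (u \<bullet> (S *v u)) *\<^sub>R u"
proof -
  let ?K = "W \<inter> sphere 0 1"
  have cK: "compact ?K"
    using closed_Int_compact[OF closed_subspace[OF W(1)] compact_sphere] .
  obtain w where w: "w \<in> W" "w \<noteq> 0" using W subspace_0 by blast
  have "w /\<^sub>R norm w \<in> ?K" using w W(1) by (simp add: subspace_scale)
  then have neK: "?K \<noteq> {}" by blast
  have cont: "continuous_on ?K (\<lambda>x. x \<bullet> (S *v x))"
    by (intro continuous_intros linear_continuous_on) simp
  obtain u where uK: "u \<in> ?K" and umax: "\<And>y. y \<in> ?K \<Longrightarrow> y \<bullet> (S *v y) \<le> u \<bullet> (S *v u)"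
    using continuous_attains_sup[OF cK neK cont] by blast
  define l where "l = u \<bullet> (S *v u)"
  have uW: "u \<in> W" and u1: "norm u = 1" using uK by auto
  have uu: "u \<bullet> u = 1" using u1 by (simp add: norm_eq_1)
  have ray: "x \<bullet> (S *v x) \<le> l * (x \<bullet> x)" if "x \<in> W" for x
  proof (cases "x = 0")
    case True then show ?thesis by simp
  next
    case False
    let ?y = "x /\<^sub>R norm x"
    have "?y \<in> ?K" using that False W(1) by (simp add: subspace_scale)
    then have "?y \<bullet> (S *v ?y) \<le> l" using umax l_def by blast
    moreover have "?y \<bullet> (S *v ?y) = (x \<bullet> (S *v x)) / (x \<bullet> x)"
      by (simp add: matrix_vector_mult_scaleR power2_norm_eq_inner[symmetric] power2_eq_square field_simps)
    moreover have "x \<bullet> x > 0" using False by simp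
    ultimately show ?thesis by (simp add: divide_le_eq mult.commute)
  qed
  define v where "v = S *v u - l *\<^sub>R u"
  have vW: "v \<in> W" unfolding v_def using W uW
    by (meson image_subset_iff subspace_diff subspace_scale)
  have vu: "v \<bullet> u = 0"
  proof -
    have "(S *v u) \<bullet> u = l" unfolding l_def by (rule inner_commute)
    then show ?thesis unfolding v_def using uu by (simp add: inner_diff_left)
  qed
  have vfu: "v \<bullet> (S *v u) = v \<bullet> v" unfolding v_def
    using vu v_def by (simp add: inner_diff_right)
  have "v = 0"
  proof (rule ccontr)
    assume "v \<noteq> 0"
    define a where "a = v \<bullet> v"
    define c where "c = v \<bullet> (S *v v)"
    have a0: "a > 0" using \<open>v \<noteq> 0\<close> a_def by simp
    define t where "t = a / (\<bar>c - l * a\<bar> + 1)"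
    have t0: "t > 0" using a0 t_def by simp
    have "u + t *\<^sub>R v \<in> W" using W(1) uW vW by (simp add: subspace_add subspace_scale)
    from ray[OF this]
    have i1: "(u + t *\<^sub>R v) \<bullet> (S *v (u + t *\<^sub>R v)) \<le> l * ((u + t *\<^sub>R v) \<bullet> (u + t *\<^sub>R v))" .
    have e1: "(u + t *\<^sub>R v) \<bullet> (S *v (u + t *\<^sub>R v)) = l + 2 * t * a + t*t*c"
    proof -
      have "u \<bullet> (S *v v) = v \<bullet> (S *v u)" using sym_dot[OF sym, of u v] by (simp add: inner_commute)
      then show ?thesis
        by (simp add: matrix_vector_right_distrib matrix_vector_mult_scaleR inner_add_left inner_add_right
            l_def a_def c_def vfu algebra_simps)
    qed
    have e2: "(u + t *\<^sub>R v) \<bullet> (u + t *\<^sub>R v) = 1 + t*t*a"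
    proof -
      have "u \<bullet> v = 0" using vu by (simp add: inner_commute)
      then show ?thesis using uu vu by (simp add: inner_add_left inner_add_right a_def algebra_simps)
    qed
    have h: "l + 2 * t * a + t*t*c \<le> l * (1 + t*t*a)" using i1 unfolding e1 e2 .
    have "l * (1 + t*t*a) = l + t*t*(l*a)" by (simp add: algebra_simps)
    moreover have "t*t*(c - l*a) = t*t*c - t*t*(l*a)" by (simp add: algebra_simps)
    ultimately have "2 * t * a + t*t*(c - l*a) \<le> 0" using h by (smt (verit))
    moreover have "t * (2*a + t*(c-l*a)) = 2*t*a + t*t*(c-l*a)" by (simp add: algebra_simps)
    ultimately have "t * (2*a + t*(c-l*a)) \<le> 0" by simp
    then have "2 * a + t*(c - l*a) \<le> 0" using t0
      by (metis linorder_not_le mult_pos_pos)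
    moreover have "t * \<bar>c - l*a\<bar> < a" unfolding t_def using a0
      by (simp add: divide_less_eq field_simps)
    moreover have "- (t * \<bar>c - l*a\<bar>) \<le> t*(c - l*a)"
    proof -
      have "t * \<bar>c - l*a\<bar> = \<bar>t * (c - l*a)\<bar>" using t0 by (simp add: abs_mult)
      then show ?thesis using abs_ge_minus_self[of "t * (c - l*a)"] by linarith
    qed
    ultimately show False using a0 by linarith
  qed
  then show ?thesis using uW u1 v_def l_def by auto
qed

lemma spectral_sub:
  fixes S :: "real^'n^'n"
  assumes sym: "transpose S = S"
  shows "subspace W \<Longrightarrow> (*v) S ` W \<subseteq> W \<Longrightarrow> \<exists>B. finite B \<and> B \<subseteq> W \<and> pairwise orthogonal B \<and>
     (\<forall>b\<in>B. norm b = 1 \<and> S *v b = (b \<bullet> (S *v b)) *\<^sub>R b) \<and> span B = W"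
proof (induction "dim W" arbitrary: W rule: less_induct)
  case less
  show ?case
  proof (cases "W = {0}")
    case True
    then show ?thesis by (intro exI[of _ "{}"]) auto
  next
    case False
    obtain u where uW: "u \<in> W" and u1: "norm u = 1" and Su: "S *v u = (u \<bullet> (S *v u)) *\<^sub>R u"
      using eig_exists[OF sym less.prems False] by blast
    define W' where "W' = W \<inter> {x. x \<bullet> u = 0}"
    have sW': "subspace W'" unfolding W'_def
      using subspace_inter[OF less.prems(1) subspace_hyperplane2[of u]] by simp
    have iW': "(*v) S ` W' \<subseteq> W'"
    proof
      fix y assume "y \<in> (*v) S ` W'"
      then obtain x where x: "x \<in> W'" "y = S *v x" by blast
      have "y \<in> W" using x less.prems(2) unfolding W'_def by auto
      moreover have "y \<bullet> u = x \<bullet> (S *v u)" using x sym_dot[OF sym] by simp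
      then have "y \<bullet> u = 0" using x Su unfolding W'_def by (metis (mono_tags, lifting) IntD2 inner_scaleR_right mem_Collect_eq mult_zero_right)
      ultimately show "y \<in> W'" unfolding W'_def by simp
    qed
    have uu: "u \<bullet> u = 1" using u1 by (simp add: norm_eq_1)
    have "W' \<subset> W" using uW uu unfolding W'_def by (metis (mono_tags, lifting) Int_iff inf_le1 mem_Collect_eq psubsetI zero_neq_one)
    then have "dim W' < dim W"
      by (metis dim_psubset less.prems(1) sW' span_eq_iff)
    from less.hyps[OF this sW' iW'] obtain B' where B': "finite B'" "B' \<subseteq> W'" "pairwise orthogonal B'"
      "\<forall>b\<in>B'. norm b = 1 \<and> S *v b = (b \<bullet> (S *v b)) *\<^sub>R b" "span B' = W'" by blast
    show ?thesis
    proof (intro exI[of _ "insert u B'"] conjI)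
      show "finite (insert u B')" using B' by simp
      show "insert u B' \<subseteq> W" using B' uW unfolding W'_def by auto
      show "pairwise orthogonal (insert u B')"
        using B'(2,3) unfolding pairwise_insert W'_def orthogonal_def
        by (auto simp: inner_commute)
      show "\<forall>b\<in>insert u B'. norm b = 1 \<and> S *v b = (b \<bullet> (S *v b)) *\<^sub>R b" using B' u1 Su by auto
      show "span (insert u B') = W"
      proof
        show "span (insert u B') \<subseteq> W" using B'(2) uW less.prems(1) unfolding W'_def
          by (simp add: span_minimal)
        show "W \<subseteq> span (insert u B')"
        proof
          fix x assume x: "x \<in> W"
          have "x - (x \<bullet> u) *\<^sub>R u \<in> W'" unfolding W'_def using x uW uu less.prems(1)
            by (simp add: subspace_diff subspace_scale inner_diff_left)
          then show "x \<in> span (insert u B')" using B'(5) span_breakdown_eq by blast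
        qed
      qed
    qed
  qed
qed

lemma orth_coef:
  assumes "finite B" "pairwise orthogonal B" "\<forall>b\<in>B. norm b = 1" "b \<in> B"
  shows "b \<bullet> (\<Sum>c\<in>B. g c *\<^sub>R c) = (g b :: real)"
proof -
  have "b \<bullet> (\<Sum>c\<in>B. g c *\<^sub>R c) = (\<Sum>c\<in>B. g c * (b \<bullet> c))"
    by (simp add: inner_sum_right)
  also have "\<dots> = (\<Sum>c\<in>B. if c = b then g b else 0)"
  proof (rule sum.cong)
    fix c assume c: "c \<in> B"
    show "g c * (b \<bullet> c) = (if c = b then g b else 0)"
    proof (cases "c = b")
      case True then show ?thesis using assms(3,4) by (simp add: norm_eq_1)
    next
      case False then show ?thesis using assms(2,4) c by (simp add: pairwise_def orthogonal_def)
    qed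
  qed simp
  also have "\<dots> = g b" using assms(1,4) by simp
  finally show ?thesis .
qed

lemma lin_expand:
  fixes B :: "(real^'n) set"
  shows "linear (\<lambda>x. \<Sum>b\<in>B. (g b * (x \<bullet> b)) *\<^sub>R b)"
  by (rule linearI) (simp_all add: inner_add_left algebra_simps sum.distrib scaleR_sum_right)

lemma sqrt_props:
  fixes S :: "real^'n^'n"
  assumes pd: "pos_def_mat S"
  shows "pos_def_mat (mat_sqrt S) \<and> mat_sqrt S ** mat_sqrt S = S"
proof -
  have sym: "transpose S = S" using pd pos_def_mat_def by blast
  obtain B where B: "finite B" "pairwise orthogonal B"
     "\<forall>b\<in>B. norm b = 1 \<and> S *v b = (b \<bullet> (S *v b)) *\<^sub>R b" "span B = UNIV"
    using spectral_sub[OF sym, of UNIV] by auto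
  have B1: "\<forall>b\<in>B. norm b = 1" using B(3) by blast
  define mu where "mu b = b \<bullet> (S *v b)" for b
  have mupos: "mu b > 0" if "b \<in> B" for b
  proof -
    have "b \<noteq> 0" using B1 that by auto
    then show ?thesis using pd unfolding pos_def_mat_def mu_def by blast
  qed
  have Sb: "S *v b = mu b *\<^sub>R b" if "b \<in> B" for b using B(3) that unfolding mu_def by blast
  have expand: "(\<Sum>b\<in>B. (x \<bullet> b) *\<^sub>R b) = x" for x
  proof -
    have "x \<in> span B" using B(4) by simp
    then show ?thesis using orthonormal_basis_expand[OF B(2) _ _ B(1)] B1 by blast
  qed
  define f where "f x = (\<Sum>b\<in>B. (sqrt (mu b) * (x \<bullet> b)) *\<^sub>R b)" for x
  define R where "R = matrix f"
  have linf: "linear f" unfolding f_def by (rule lin_expand)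
  have Rx: "R *v x = f x" for x
    using fun_cong[OF matrix_vector_mul(2)[OF linf], of x] unfolding R_def .
  have bR: "b \<bullet> (R *v x) = sqrt (mu b) * (x \<bullet> b)" if "b \<in> B" for b x
    unfolding Rx f_def by (rule orth_coef[OF B(1,2) B1 that])
  have xRy: "x \<bullet> (R *v y) = (\<Sum>b\<in>B. sqrt (mu b) * (y \<bullet> b) * (x \<bullet> b))" for x y
    unfolding Rx f_def by (simp add: inner_sum_right)
  have Rsym: "(R *v x) \<bullet> y = x \<bullet> (R *v y)" for x y
  proof -
    have "(R *v x) \<bullet> y = y \<bullet> (R *v x)" by (rule inner_commute)
    also have "\<dots> = (\<Sum>b\<in>B. sqrt (mu b) * (x \<bullet> b) * (y \<bullet> b))" by (rule xRy)
    also have "\<dots> = (\<Sum>b\<in>B. sqrt (mu b) * (y \<bullet> b) * (x \<bullet> b))"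
      by (rule sum.cong) (simp_all add: mult.assoc mult.commute[of "x \<bullet> _"])
    also have "\<dots> = x \<bullet> (R *v y)" by (rule xRy[symmetric])
    finally show ?thesis .
  qed
  have tR: "transpose R = R"
  proof -
    have "transpose R *v x = R *v x" for x
    proof -
      have "(x v* R) \<bullet> z = (R *v x) \<bullet> z" for z by (simp add: dot_lmul_matrix Rsym)
      then show ?thesis using vector_eq_rdot[of "x v* R" "R *v x"] by simp
    qed
    then show ?thesis by (simp add: matrix_eq)
  qed
  have Rpos: "x \<bullet> (R *v x) > 0" if "x \<noteq> 0" for x
  proof -
    obtain b where b: "b \<in> B" "x \<bullet> b \<noteq> 0"
    proof (rule ccontr)
      assume "\<not> thesis"
      then have "\<forall>b\<in>B. x \<bullet> b = 0" using that by blast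
      then have "x = 0" using expand[of x] by simp
      with \<open>x \<noteq> 0\<close> show False by simp
    qed
    have "(\<Sum>c\<in>B. sqrt (mu c) * (x \<bullet> c) * (x \<bullet> c)) > 0"
    proof (rule sum_pos2[OF B(1) b(1)])
      show "0 < sqrt (mu b) * (x \<bullet> b) * (x \<bullet> b)" using mupos[OF b(1)] b(2)
        by (simp add: mult.assoc mult_pos_pos not_square_less_zero less_le)
      show "\<And>c. c \<in> B \<Longrightarrow> 0 \<le> sqrt (mu c) * (x \<bullet> c) * (x \<bullet> c)"
        using mupos by (simp add: mult.assoc less_imp_le)
    qed
    then show ?thesis using xRy[of x x] by simp
  qed
  have pdR: "pos_def_mat R" unfolding pos_def_mat_def using tR Rpos by blast
  have RR: "R ** R = S"
  proof -
    have "(R ** R) *v x = S *v x" for x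
    proof -
      have "(R ** R) *v x = f (R *v x)" unfolding matrix_vector_mul_assoc[symmetric] by (rule Rx)
      also have "\<dots> = (\<Sum>b\<in>B. (x \<bullet> b) *\<^sub>R (S *v b))" unfolding f_def
      proof (rule sum.cong)
        fix b assume b: "b \<in> B"
        have e: "(R *v x) \<bullet> b = sqrt (mu b) * (x \<bullet> b)" by (metis bR[OF b] inner_commute)
        have sq: "sqrt (mu b) * sqrt (mu b) = mu b" using mupos[OF b] by simp
        have "sqrt (mu b) * ((R *v x) \<bullet> b) = (x \<bullet> b) * mu b"
          unfolding e mult.assoc[symmetric] sq by (rule mult.commute)
        then show "(sqrt (mu b) * ((R *v x) \<bullet> b)) *\<^sub>R b = (x \<bullet> b) *\<^sub>R (S *v b)"
          unfolding Sb[OF b] scaleR_scaleR by simp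
      qed simp
      also have "\<dots> = S *v (\<Sum>b\<in>B. (x \<bullet> b) *\<^sub>R b)"
        by (simp add: vec.sum matrix_vector_mult_scaleR)
      also have "\<dots> = S *v x" unfolding expand ..
      finally show ?thesis .
    qed
    then show ?thesis by (simp add: matrix_eq)
  qed
  have uniq: "X = R" if "pos_def_mat X" "X ** X = S" for X
  proof -
    have Xb: "X *v b = sqrt (mu b) *\<^sub>R b" if b: "b \<in> B" for b
    proof -
      define c where "c = sqrt (mu b)"
      define w where "w = X *v b - c *\<^sub>R b"
      have cc: "c * c = mu b" using mupos[OF b] c_def by simp
      have "X *v w = S *v b - c *\<^sub>R (X *v b)"
        unfolding w_def using \<open>X ** X = S\<close>
        by (simp add: matrix_vector_mult_diff_distrib matrix_vector_mult_scaleR matrix_vector_mul_assoc)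
      also have "\<dots> = - c *\<^sub>R w" unfolding w_def using Sb[OF b] cc
        by (simp add: algebra_simps)
      finally have Xw: "X *v w = - c *\<^sub>R w" .
      have "w = 0"
      proof (rule ccontr)
        assume "w \<noteq> 0"
        then have "w \<bullet> (X *v w) > 0" using \<open>pos_def_mat X\<close> unfolding pos_def_mat_def by blast
        moreover have "c \<ge> 0" using c_def mupos[OF b] by simp
        ultimately have "c * (w \<bullet> w) < 0" "0 \<le> c * (w \<bullet> w)" unfolding Xw by (simp_all add: mult_nonneg_nonneg)
        then show False by linarith
      qed
      then show ?thesis unfolding w_def c_def by simp
    qed
    have "X *v x = R *v x" for x
    proof -
      have "X *v x = X *v (\<Sum>b\<in>B. (x \<bullet> b) *\<^sub>R b)" unfolding expand ..
      also have "\<dots> = (\<Sum>b\<in>B. (x \<bullet> b) *\<^sub>R (X *v b))"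
        by (simp add: vec.sum matrix_vector_mult_scaleR)
      also have "\<dots> = R *v x" unfolding Rx f_def
        by (rule sum.cong) (simp_all add: Xb mult.commute)
      finally show ?thesis .
    qed
    then show ?thesis by (simp add: matrix_eq)
  qed
  have "mat_sqrt S = R" unfolding mat_sqrt_def
  proof (rule the_equality)
    show "pos_def_mat R \<and> R ** R = S" using pdR RR by blast
    fix X assume "pos_def_mat X \<and> X ** X = S"
    then show "X = R" using uniq by blast
  qed
  then show ?thesis using pdR RR by simp
qed



lemma mat_diff_ldistrib: "(A::real^'n^'m) ** (B - C) = A ** B - A ** C"
  by (simp add: matrix_matrix_mult_def vec_eq_iff sum_subtractf algebra_simps)

lemma mat_diff_rdistrib: "((A::real^'n^'m) - B) ** C = A ** C - B ** C"
  by (simp add: matrix_matrix_mult_def vec_eq_iff sum_subtractf algebra_simps)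

lemma mat_add_rdistrib: "((A::real^'n^'m) + B) ** C = A ** C + B ** C"
  by (simp add: matrix_matrix_mult_def vec_eq_iff sum.distrib algebra_simps)

lemma mat_scale_r: "(A::real^'n^'m) ** (c *\<^sub>R B) = c *\<^sub>R (A ** B)"
  by (simp add: matrix_matrix_mult_def vec_eq_iff sum_distrib_left algebra_simps)

lemma transpose_add: "transpose ((A::real^'n^'m) + B) = transpose A + transpose B"
  by (simp add: transpose_def vec_eq_iff)

lemma transpose_diff: "transpose ((A::real^'n^'m) - B) = transpose A - transpose B"
  by (simp add: transpose_def vec_eq_iff)

lemma linear_proj: "linear (proj_St (G::real^'k^'p))"
proof (rule linearI)
  fix X Y :: "real^'k^'p"
  show "proj_St G (X + Y) = proj_St G X + proj_St G Y"
    unfolding proj_St_def sym_part_def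
    by (simp add: matrix_add_ldistrib transpose_add scaleR_add_right algebra_simps)
next
  fix c :: real and X :: "real^'k^'p"
  show "proj_St G (c *\<^sub>R X) = c *\<^sub>R proj_St G X"
    unfolding proj_St_def sym_part_def
    by (simp add: mat_scale_r transpose_scalar scaleR_add_right[symmetric] scaleR_diff_right)
qed

lemma core:
  fixes A :: "real^'k^'p"
  assumes "rank A = CARD('k)"
  shows "proj_St (uf A) (A - uf A) = 0"
proof -
  define S where "S = transpose A ** A"
  have injA: "inj ((*v) A)" using assms full_rank_injective by blast
  have pdS: "pos_def_mat S" unfolding pos_def_mat_def
  proof (intro conjI allI impI)
    show "transpose S = S" unfolding S_def by (simp add: matrix_transpose_mul)
    fix x :: "real^'k" assume "x \<noteq> 0"
    then have "A *v x \<noteq> 0" using injA by (metis injD matrix_vector_mult_0_right)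
    moreover have "x \<bullet> (S *v x) = (A *v x) \<bullet> (A *v x)"
      unfolding S_def by (simp add: matrix_vector_mul_assoc[symmetric] inner_commute[of x] dot_lmul_matrix)
    ultimately show "x \<bullet> (S *v x) > 0" by simp
  qed
  define R where "R = mat_sqrt S"
  have pdR: "pos_def_mat R" and RR: "R ** R = S" using sqrt_props[OF pdS] R_def by auto
  have tR: "transpose R = R" using pdR pos_def_mat_def by blast
  have injR: "inj ((*v) R)"
  proof (rule injI)
    fix x y assume "R *v x = R *v y"
    then have "R *v (x - y) = 0" by (simp add: matrix_vector_mult_diff_distrib)
    then have "(x - y) \<bullet> (R *v (x - y)) = 0" by simp
    then show "x = y" using pdR unfolding pos_def_mat_def by (metis eq_iff_diff_eq_0 less_irrefl)
  qed
  have "invertible R"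
    using injR matrix_left_invertible_injective invertible_left_inverse by blast
  then have "\<exists>A'. R ** A' = mat 1 \<and> A' ** R = mat 1" unfolding invertible_def .
  then have Ri: "R ** matrix_inv R = mat 1" "matrix_inv R ** R = mat 1"
    unfolding matrix_inv_def by (metis (mono_tags, lifting) someI_ex)+
  define Q where "Q = matrix_inv R"
  have G: "uf A = A ** Q" unfolding uf_def Q_def R_def S_def ..
  have GR: "uf A ** R = A" unfolding G using Ri(2) by (simp add: Q_def matrix_mul_assoc[symmetric])
  have QtR: "transpose Q ** R = mat 1"
    using Ri(1) tR by (metis Q_def matrix_transpose_mul transpose_mat)
  have GtA: "transpose (uf A) ** A = R"
  proof -
    have "transpose (uf A) ** A = (transpose Q ** transpose A) ** A"
      unfolding G by (simp add: matrix_transpose_mul)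
    also have "\<dots> = transpose Q ** S" unfolding S_def by (simp add: matrix_mul_assoc)
    also have "\<dots> = (transpose Q ** R) ** R" unfolding RR[symmetric] by (simp add: matrix_mul_assoc)
    also have "\<dots> = R" unfolding QtR by simp
    finally show ?thesis .
  qed
  have GtG: "transpose (uf A) ** uf A = mat 1"
  proof -
    have "transpose (uf A) ** uf A = (transpose (uf A) ** A) ** Q"
      unfolding G[symmetric] by (simp add: G matrix_mul_assoc)
    also have "\<dots> = mat 1" unfolding GtA Q_def by (rule Ri(1))
    finally show ?thesis .
  qed
  have T: "transpose (uf A) ** (A - uf A) = R - mat 1"
    by (simp add: mat_diff_ldistrib GtA GtG)
  have sT: "sym_part (R - mat 1) = R - mat 1"
  proof -
    have h: "(1/2) *\<^sub>R (X + X) = X" for X :: "real^'k^'k" by (simp add: scaleR_2[symmetric])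
    show ?thesis unfolding sym_part_def transpose_diff tR transpose_mat by (rule h)
  qed
  show ?thesis
    unfolding proj_St_def T sT by (simp add: mat_diff_ldistrib GR)
qed



theorem mainTheorem3:
  fixes M :: "nat \<Rightarrow> real^'k^'p" and n :: nat
  assumes "n \<ge> 1"
    and "\<forall>i\<in>{1..n}. M i \<in> stiefel"
    and "rank ((1 / real n) *\<^sub>R (\<Sum>i=1..n. M i)) = CARD('k)"
  shows "(1 / real n) *\<^sub>R (\<Sum>i=1..n. proj_St (uf ((1 / real n) *\<^sub>R (\<Sum>i=1..n. M i))) (M i - uf ((1 / real n) *\<^sub>R (\<Sum>i=1..n. M i)))) = 0"
proof -
  define A where "A = (1 / real n) *\<^sub>R (\<Sum>i=1..n. M i)"
  define G where "G = uf A"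
  have c0: "proj_St G (A - G) = 0" unfolding G_def using core assms(3) A_def by blast
  have nA: "(\<Sum>i=1..n. M i) = real n *\<^sub>R A" unfolding A_def using assms(1) by simp
  have "(\<Sum>i=1..n. proj_St G (M i - G)) = proj_St G (\<Sum>i=1..n. (M i - G))"
    by (rule real_vector.linear_sum[OF linear_proj, symmetric])
  also have "(\<Sum>i=1..n. (M i - G)) = real n *\<^sub>R (A - G)"
  proof -
    have "(\<Sum>i=1..n. G) = real n *\<^sub>R G" by (simp only: real_vector.sum_constant_scale card_atLeastAtMost) simp
    then show ?thesis unfolding sum_subtractf nA by (simp add: scaleR_diff_right)
  qed
  also have "proj_St G (real n *\<^sub>R (A - G)) = real n *\<^sub>R proj_St G (A - G)"
    by (rule real_vector.linear_scale[OF linear_proj])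
  finally have "(\<Sum>i=1..n. proj_St G (M i - G)) = 0" using c0 by simp
  then show ?thesis unfolding G_def A_def by simp
qed

end
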